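(* Assume Condition 1. For any $t\ge t_1$ and $\pi\in\Pi$, if $V_t(\pi)>\theta K$, then \[\Delta_{t-1}(\pi)\ge\sqrt{\frac{72\,V_t(\pi)\,C_{t-1}}{t-1}}.\]
   Context: Contextual bandit setting: $A$ a set of $K$ actions, $X$ contexts, $\Pi$ a finite set of $N$ policies, $D$ a distribution over $(x,\vec r)\in X\times[0,1]^K$ with marginal $D_X$; $(x_t,\vec r_t)\sim D$ i.i.d., the learner observes $x_t$, picks $a_t$, sees only $r_t:=r_t(a_t)$. $\eta_D(\pi)=\mathbb{E}[r(\pi(x))]$, $\pi^*$ a maximizer. $W_P(x,a)=\sum_{\pi:\pi(x)=a}P(\pi)$. With history $((x_i,a_i,r_i,p_i))_{i\le t}$, $\eta_t(W)=\frac1t\sum_i r_iW(x_i,a_i)/p_i$ for randomized policies $W$, $\pi_t=\arg\max_\pi\eta_t(\pi)$, $\Delta_t(W)=\eta_t(\pi_t)-\eta_t(W)$; $\mathbb{E}_{x\sim h_{t-1}}$ is the average over $x_1,\dots,x_{t-1}$. Actions are chosen by RandomizedUCB$(\Pi,\delta,K)$: $C_t=2\log(Nt/\delta)$, $\mu_t=\min\{\frac1{2K},\sqrt{C_t/(2Kt)}\}$; $P_t$ is a distribution over $\Pi$ whose objective $\sum_\pi P(\pi)\Delta_{t-1}(\pi)$ is within $\epsilon_{\mathrm{opt},t}=O(\sqrt{KC_t/t})$ of the optimum of minimizing it subject to: for all distributions $Q$ over $\Pi$, $\mathbb{E}_{\pi\sim Q}\mathbb{E}_{x\sim h_{t-1}}[1/((1-K\mu_t)W_P(x,\pi(x))+\mu_t)]\le\max\{4K,(t-1)\Delta_{t-1}(W_Q)^2/(180C_{t-1})\}$,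 with each constraint satisfied up to additive slack $K$; $W'_t(a)=(1-K\mu_t)W_{P_t}(x_t,a)+\mu_t$, $a_t\sim W'_t$, $p_t=W'_t(a_t)$. Constants: $\epsilon\in(0,1)$ fixed, $\rho=7500/\epsilon^3$, $\theta=(\rho+1)/(1-(1+\epsilon)/2)$. $t_0$ is the first $t$ with $\mu_t=\sqrt{C_t/(2Kt)}$; $t_1=\lceil16K\log(8KN/\delta)\rceil$. $V_t(\pi)=K$ for $t\le t_0$ and $V_t(\pi)=K+\mathbb{E}_{x\sim D_X}[1/((1-K\mu_t)W_{P_t}(x,\pi(x))+\mu_t)]$ for $t>t_0$; $\bar V_t(\pi)=\max_{\tau\le t}V_\tau(\pi)$. Condition 1: (i) for all $\pi\in\Pi$ and $t\ge t_1$, $\mathbb{E}_{x\sim D_X}[1/((1-K\mu_t)W_{P_t}(x,\pi(x))+\mu_t)]\le(1+\epsilon)\mathbb{E}_{x\sim h_{t-1}}[1/((1-K\mu_t)W_{P_t}(x,\pi(x))+\mu_t)]+\rho K$; and (ii) for all $\pi,\pi'\in\Pi$ and $t\ge t_0$, $|(\eta_t(\pi)-\eta_t(\pi'))-(\eta_D(\pi)-\eta_D(\pi'))|\le2\sqrt{(\bar V_t(\pi)+\bar V_t(\pi'))C_t/t}$. *)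

theory Defs
  imports "HOL-Probability.Probability"
begin

text \<open>Actions: a finite set A of K = card A actions.  Policies: a finite set Pol of
  functions from contexts to actions, N = card Pol.  Time is indexed from 1;
  the realised history is given by sequences
  xs i (context), rs i (reward vector), as i (chosen action), ps i (its probability),
  and P i is the distribution over Pol used in round i.\<close>

definition is_dist :: "'p set \<Rightarrow> ('p \<Rightarrow> real) \<Rightarrow> bool" where
  "is_dist Pol P \<longleftrightarrow> (\<forall>\<pi>\<in>Pol. 0 \<le> P \<pi>) \<and> sum P Pol = 1"

definition WP :: "('x \<Rightarrow> 'a) set \<Rightarrow> (('x \<Rightarrow> 'a) \<Rightarrow> real) \<Rightarrow> 'x \<Rightarrow> 'a \<Rightarrow> real" where
  "WP Pol P x a = (\<Sum>\<pi>\<in>{\<pi>\<in>Pol. \<pi> x = a}. P \<pi>)"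

definition polW :: "('x \<Rightarrow> 'a) \<Rightarrow> 'x \<Rightarrow> 'a \<Rightarrow> real" where
  "polW \<pi> x a = (if \<pi> x = a then 1 else 0)"

definition eta_hist :: "(nat \<Rightarrow> 'x) \<Rightarrow> (nat \<Rightarrow> 'a \<Rightarrow> real) \<Rightarrow> (nat \<Rightarrow> 'a) \<Rightarrow> (nat \<Rightarrow> real)
    \<Rightarrow> nat \<Rightarrow> ('x \<Rightarrow> 'a \<Rightarrow> real) \<Rightarrow> real" where
  "eta_hist xs rs as ps t W =
     (1 / real t) * (\<Sum>i=1..t. rs i (as i) * W (xs i) (as i) / ps i)"

definition Delta_hist :: "('x \<Rightarrow> 'a) set \<Rightarrow> (nat \<Rightarrow> 'x) \<Rightarrow> (nat \<Rightarrow> 'a \<Rightarrow> real) \<Rightarrow> (nat \<Rightarrow> 'a)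
    \<Rightarrow> (nat \<Rightarrow> real) \<Rightarrow> nat \<Rightarrow> ('x \<Rightarrow> 'a \<Rightarrow> real) \<Rightarrow> real" where
  "Delta_hist Pol xs rs as ps t W =
     Max ((\<lambda>\<pi>. eta_hist xs rs as ps t (polW \<pi>)) ` Pol) - eta_hist xs rs as ps t W"

definition hist_avg :: "(nat \<Rightarrow> 'x) \<Rightarrow> nat \<Rightarrow> ('x \<Rightarrow> real) \<Rightarrow> real" where
  "hist_avg xs t f = (1 / real t) * (\<Sum>i=1..t. f (xs i))"

definition Cc :: "nat \<Rightarrow> real \<Rightarrow> nat \<Rightarrow> real" where
  "Cc N \<delta> t = 2 * ln (real N * real t / \<delta>)"

definition mu :: "nat \<Rightarrow> nat \<Rightarrow> real \<Rightarrow> nat \<Rightarrow> real" where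
  "mu K N \<delta> t = min (1 / (2 * real K)) (sqrt (Cc N \<delta> t / (2 * real K * real t)))"

definition rucb_feasible :: "'a set \<Rightarrow> ('x \<Rightarrow> 'a) set \<Rightarrow> real \<Rightarrow> (nat \<Rightarrow> 'x) \<Rightarrow> (nat \<Rightarrow> 'a \<Rightarrow> real)
    \<Rightarrow> (nat \<Rightarrow> 'a) \<Rightarrow> (nat \<Rightarrow> real) \<Rightarrow> nat \<Rightarrow> real \<Rightarrow> (('x \<Rightarrow> 'a) \<Rightarrow> real) \<Rightarrow> bool" where
  "rucb_feasible A Pol \<delta> xs rs as ps t s P \<longleftrightarrow>
     is_dist Pol P \<and>
     (\<forall>Q. is_dist Pol Q \<longrightarrow>
        (\<Sum>\<pi>\<in>Pol. Q \<pi> * hist_avg xs (t - 1)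
            (\<lambda>x. 1 / ((1 - real (card A) * mu (card A) (card Pol) \<delta> t) * WP Pol P x (\<pi> x)
                      + mu (card A) (card Pol) \<delta> t)))
        \<le> max (4 * real (card A))
               (real (t - 1) * (Delta_hist Pol xs rs as ps (t - 1) (WP Pol Q))\<^sup>2
                 / (180 * Cc (card Pol) \<delta> (t - 1))) + s)"

text \<open>The (deterministic) properties of a run of RandomizedUCB(Pol, delta, K) on the
  realised data: for every round t >= 1, P t satisfies all constraints up to slack K,
  its objective is within eps_opt,t = copt * sqrt(K C_t / t) of the value of every
  exactly feasible distribution, a_t is an action and p_t = W'_t(a_t).\<close>
definition rucb_run :: "'a set \<Rightarrow> ('x \<Rightarrow> 'a) set \<Rightarrow> real \<Rightarrow> real \<Rightarrow> (nat \<Rightarrow> 'x) \<Rightarrow> (nat \<Rightarrow> 'a \<Rightarrow> real)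
    \<Rightarrow> (nat \<Rightarrow> 'a) \<Rightarrow> (nat \<Rightarrow> real) \<Rightarrow> (nat \<Rightarrow> ('x \<Rightarrow> 'a) \<Rightarrow> real) \<Rightarrow> bool" where
  "rucb_run A Pol \<delta> copt xs rs as ps P \<longleftrightarrow>
     (\<forall>t\<ge>1.
        rucb_feasible A Pol \<delta> xs rs as ps t (real (card A)) (P t) \<and>
        (\<forall>P'. rucb_feasible A Pol \<delta> xs rs as ps t 0 P' \<longrightarrow>
           (\<Sum>\<pi>\<in>Pol. P t \<pi> * Delta_hist Pol xs rs as ps (t - 1) (polW \<pi>))
             \<le> (\<Sum>\<pi>\<in>Pol. P' \<pi> * Delta_hist Pol xs rs as ps (t - 1) (polW \<pi>))
                + copt * sqrt (real (card A) * Cc (card Pol) \<delta> t / real t)) \<and>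
        as t \<in> A \<and>
        ps t = (1 - real (card A) * mu (card A) (card Pol) \<delta> t) * WP Pol (P t) (xs t) (as t)
               + mu (card A) (card Pol) \<delta> t)"

definition rho :: "real \<Rightarrow> real" where
  "rho \<epsilon> = 7500 / \<epsilon> ^ 3"

definition theta :: "real \<Rightarrow> real" where
  "theta \<epsilon> = (rho \<epsilon> + 1) / (1 - (1 + \<epsilon>) / 2)"

definition t0 :: "nat \<Rightarrow> nat \<Rightarrow> real \<Rightarrow> nat" where
  "t0 K N \<delta> = (LEAST t. 1 \<le> t \<and> mu K N \<delta> t = sqrt (Cc N \<delta> t / (2 * real K * real t)))"

definition t1 :: "nat \<Rightarrow> nat \<Rightarrow> real \<Rightarrow> nat" where
  "t1 K N \<delta> = nat \<lceil>16 * real K * ln (8 * real K * real N / \<delta>)\<rceil>"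

text \<open>Expectation over the context marginal D_X of D (D a distribution on pairs
  (context, reward vector)).\<close>
definition EX_D :: "('x \<times> ('a \<Rightarrow> real)) measure \<Rightarrow> ('x \<Rightarrow> real) \<Rightarrow> real" where
  "EX_D D f = (\<integral>z. f (fst z) \<partial>D)"

definition eta_D :: "('x \<times> ('a \<Rightarrow> real)) measure \<Rightarrow> ('x \<Rightarrow> 'a) \<Rightarrow> real" where
  "eta_D D \<pi> = (\<integral>z. snd z (\<pi> (fst z)) \<partial>D)"

definition V :: "'a set \<Rightarrow> ('x \<Rightarrow> 'a) set \<Rightarrow> real \<Rightarrow> ('x \<times> ('a \<Rightarrow> real)) measure
    \<Rightarrow> (nat \<Rightarrow> ('x \<Rightarrow> 'a) \<Rightarrow> real) \<Rightarrow> nat \<Rightarrow> ('x \<Rightarrow> 'a) \<Rightarrow> real" where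
  "V A Pol \<delta> D P t \<pi> =
     (if t \<le> t0 (card A) (card Pol) \<delta> then real (card A)
      else real (card A) + EX_D D (\<lambda>x. 1 / ((1 - real (card A) * mu (card A) (card Pol) \<delta> t)
                                              * WP Pol (P t) x (\<pi> x) + mu (card A) (card Pol) \<delta> t)))"

definition Vbar :: "'a set \<Rightarrow> ('x \<Rightarrow> 'a) set \<Rightarrow> real \<Rightarrow> ('x \<times> ('a \<Rightarrow> real)) measure
    \<Rightarrow> (nat \<Rightarrow> ('x \<Rightarrow> 'a) \<Rightarrow> real) \<Rightarrow> nat \<Rightarrow> ('x \<Rightarrow> 'a) \<Rightarrow> real" where
  "Vbar A Pol \<delta> D P t \<pi> = Max ((\<lambda>\<tau>. V A Pol \<delta> D P \<tau> \<pi>) ` {..t})"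

definition condition1 :: "real \<Rightarrow> 'a set \<Rightarrow> ('x \<Rightarrow> 'a) set \<Rightarrow> real \<Rightarrow> ('x \<times> ('a \<Rightarrow> real)) measure
    \<Rightarrow> (nat \<Rightarrow> 'x) \<Rightarrow> (nat \<Rightarrow> 'a \<Rightarrow> real) \<Rightarrow> (nat \<Rightarrow> 'a) \<Rightarrow> (nat \<Rightarrow> real)
    \<Rightarrow> (nat \<Rightarrow> ('x \<Rightarrow> 'a) \<Rightarrow> real) \<Rightarrow> bool" where
  "condition1 \<epsilon> A Pol \<delta> D xs rs as ps P \<longleftrightarrow>
     (\<forall>\<pi>\<in>Pol. \<forall>t\<ge>t1 (card A) (card Pol) \<delta>.
        (let m = mu (card A) (card Pol) \<delta> t;
             f = (\<lambda>x. 1 / ((1 - real (card A) * m) * WP Pol (P t) x (\<pi> x) + m))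
         in EX_D D f \<le> (1 + \<epsilon>) * hist_avg xs (t - 1) f + rho \<epsilon> * real (card A))) \<and>
     (\<forall>\<pi>\<in>Pol. \<forall>\<pi>'\<in>Pol. \<forall>t\<ge>t0 (card A) (card Pol) \<delta>.
        \<bar>(eta_hist xs rs as ps t (polW \<pi>) - eta_hist xs rs as ps t (polW \<pi>'))
           - (eta_D D \<pi> - eta_D D \<pi>')\<bar>
        \<le> 2 * sqrt ((Vbar A Pol \<delta> D P t \<pi> + Vbar A Pol \<delta> D P t \<pi>') * Cc (card Pol) \<delta> t / real t))"

end

theory Submission
  imports Defs
begin

theorem lemma12:
  fixes A :: "'a set" and Pol :: "('x \<Rightarrow> 'a) set" and \<delta> \<epsilon> copt :: real
    and D :: "('x \<times> ('a \<Rightarrow> real)) measure"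
    and xs :: "nat \<Rightarrow> 'x" and rs :: "nat \<Rightarrow> 'a \<Rightarrow> real" and as :: "nat \<Rightarrow> 'a"
    and ps :: "nat \<Rightarrow> real" and P :: "nat \<Rightarrow> ('x \<Rightarrow> 'a) \<Rightarrow> real"
    and t :: nat and \<pi> :: "'x \<Rightarrow> 'a"
  assumes "finite A" and "A \<noteq> {}"
    and "finite Pol" and "Pol \<noteq> {}" and "\<forall>\<sigma>\<in>Pol. \<forall>x. \<sigma> x \<in> A"
    and "0 < \<delta>" and "\<delta> < 1"
    and "0 < \<epsilon>" and "\<epsilon> < 1"
    and "prob_space D"
    and "\<forall>z\<in>space D. \<forall>a\<in>A. 0 \<le> snd z a \<and> snd z a \<le> 1"
    and "\<forall>i. \<forall>a\<in>A. 0 \<le> rs i a \<and> rs i a \<le> 1"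
    and "rucb_run A Pol \<delta> copt xs rs as ps P"
    and "condition1 \<epsilon> A Pol \<delta> D xs rs as ps P"
    and "t \<ge> t1 (card A) (card Pol) \<delta>"
    and "\<pi> \<in> Pol"
    and "V A Pol \<delta> D P t \<pi> > theta \<epsilon> * real (card A)"
  shows "Delta_hist Pol xs rs as ps (t - 1) (polW \<pi>)
           \<ge> sqrt (72 * V A Pol \<delta> D P t \<pi> * Cc (card Pol) \<delta> (t - 1) / real (t - 1))"
proof -
  define K where "K = real (card A)"
  define m where "m = mu (card A) (card Pol) \<delta> t"
  define f where "f = (\<lambda>x. 1 / ((1 - real (card A) * m) * WP Pol (P t) x (\<pi> x) + m))"
  define C where "C = Cc (card Pol) \<delta> (t - 1)"
  define Dl where "Dl = Delta_hist Pol xs rs as ps (t - 1) (polW \<pi>)"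
  define Vt where "Vt = V A Pol \<delta> D P t \<pi>"
  define r where "r = rho \<epsilon>"
  have K1: "K \<ge> 1" using assms(1,2) unfolding K_def
    by (simp add: Suc_leI card_gt_0_iff)
  have rbig: "r \<ge> 7500" unfolding r_def rho_def
  proof -
    have "\<epsilon> ^ 3 \<le> 1" using assms(8,9) by (simp add: power_le_one)
    moreover have "\<epsilon> ^ 3 > 0" using assms(8) by simp
    ultimately show "7500 \<le> 7500 / \<epsilon> ^ 3" by (simp add: field_simps)
  qed
  have th: "theta \<epsilon> = 2 * (r + 1) / (1 - \<epsilon>)" unfolding theta_def r_def
    using assms(9) by (simp add: field_simps)
  have thge: "theta \<epsilon> \<ge> 2 * (r + 1)" unfolding th using assms(8,9) rbig
    by (simp add: field_simps)
  have VK: "Vt > theta \<epsilon> * K" using assms(17) unfolding Vt_def K_def .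
  have "theta \<epsilon> * K > 1 * K" using thge rbig K1
    by (intro mult_strict_right_mono) auto
  hence "theta \<epsilon> * K > K" by simp
  hence tgt: "\<not> t \<le> t0 (card A) (card Pol) \<delta>" using VK unfolding Vt_def V_def K_def by auto
  hence t1': "t \<ge> 1" by simp
  have Vt_eq: "Vt = K + EX_D D f" using tgt unfolding Vt_def V_def K_def f_def m_def by simp
  have c1: "EX_D D f \<le> (1 + \<epsilon>) * hist_avg xs (t - 1) f + r * K"
  proof -
    have "\<forall>\<pi>\<in>Pol. \<forall>t\<ge>t1 (card A) (card Pol) \<delta>.
        (let m = mu (card A) (card Pol) \<delta> t;
             f = (\<lambda>x. 1 / ((1 - real (card A) * m) * WP Pol (P t) x (\<pi> x) + m))
         in EX_D D f \<le> (1 + \<epsilon>) * hist_avg xs (t - 1) f + rho \<epsilon> * real (card A))"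
      using assms(14) unfolding condition1_def by (rule conjunct1)
    hence "(let m = mu (card A) (card Pol) \<delta> t;
             f = (\<lambda>x. 1 / ((1 - real (card A) * m) * WP Pol (P t) x (\<pi> x) + m))
         in EX_D D f \<le> (1 + \<epsilon>) * hist_avg xs (t - 1) f + rho \<epsilon> * real (card A))"
      using assms(15,16) by blast
    thus ?thesis unfolding Let_def f_def m_def r_def K_def .
  qed
  have run: "rucb_feasible A Pol \<delta> xs rs as ps t (real (card A)) (P t)"
    using assms(13) t1' unfolding rucb_run_def by blast
  define Q where "Q = (\<lambda>\<sigma>::'x\<Rightarrow>'a. if \<sigma> = \<pi> then (1::real) else 0)"
  have Qd: "is_dist Pol Q" unfolding is_dist_def Q_def using assms(3,16)
    by (simp add: sum.delta')
  have WQ: "WP Pol Q = polW \<pi>"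
  proof (intro ext)
    fix x a
    have fin: "finite {\<sigma>\<in>Pol. \<sigma> x = a}" using assms(3) by simp
    show "WP Pol Q x a = polW \<pi> x a"
      unfolding WP_def Q_def polW_def using sum.delta[OF fin, of \<pi> "\<lambda>_. 1::real"] assms(16)
      by (auto simp: if_distrib cong: if_cong)
  qed
  have sumQ: "(\<Sum>\<sigma>\<in>Pol. Q \<sigma> * hist_avg xs (t - 1)
            (\<lambda>x. 1 / ((1 - real (card A) * mu (card A) (card Pol) \<delta> t) * WP Pol (P t) x (\<sigma> x)
                      + mu (card A) (card Pol) \<delta> t))) = hist_avg xs (t - 1) f"
    unfolding Q_def f_def m_def using assms(3,16)
    by (simp add: sum.delta mult_delta_left)
  define M where "M = real (t - 1) * Dl\<^sup>2 / (180 * C)"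
  have feas: "hist_avg xs (t - 1) f \<le> max (4 * K) M + K"
  proof -
    have "\<forall>Q. is_dist Pol Q \<longrightarrow>
        (\<Sum>\<pi>\<in>Pol. Q \<pi> * hist_avg xs (t - 1)
            (\<lambda>x. 1 / ((1 - real (card A) * mu (card A) (card Pol) \<delta> t) * WP Pol (P t) x (\<pi> x)
                      + mu (card A) (card Pol) \<delta> t)))
        \<le> max (4 * real (card A))
               (real (t - 1) * (Delta_hist Pol xs rs as ps (t - 1) (WP Pol Q))\<^sup>2
                 / (180 * Cc (card Pol) \<delta> (t - 1))) + real (card A)"
      using run unfolding rucb_feasible_def by (rule conjunct2)
    from spec[OF this, of Q] Qd show ?thesis
      unfolding sumQ WQ M_def Dl_def C_def K_def by simp
  qed
  have Dl0: "Dl \<ge> 0"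
  proof -
    have "eta_hist xs rs as ps (t - 1) (polW \<pi>) \<le> Max ((\<lambda>\<pi>. eta_hist xs rs as ps (t - 1) (polW \<pi>)) ` Pol)"
      using assms(3,16) by (intro Max_ge) auto
    thus ?thesis unfolding Dl_def Delta_hist_def by simp
  qed
  have Vle: "Vt \<le> K + (1 + \<epsilon>) * (max (4 * K) M + K) + r * K"
  proof -
    have "(1 + \<epsilon>) * hist_avg xs (t - 1) f \<le> (1 + \<epsilon>) * (max (4 * K) M + K)"
      using feas assms(8) by (intro mult_left_mono) auto
    thus ?thesis using Vt_eq c1 by linarith
  qed
  have M4: "M \<ge> 4 * K"
  proof (rule ccontr)
    assume "\<not> M \<ge> 4 * K"
    hence "Vt \<le> K + (1 + \<epsilon>) * (5 * K) + r * K" using Vle by simp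
    also have "\<dots> \<le> (r + 11) * K" using assms(9) K1 by (simp add: algebra_simps)
    also have "\<dots> \<le> theta \<epsilon> * K" using thge rbig K1 by (intro mult_right_mono) auto
    finally show False using VK by simp
  qed
  have Vle2: "Vt \<le> (1 + \<epsilon>) * M + (2 + \<epsilon> + r) * K"
    using Vle M4 by (simp add: algebra_simps)
  have keyK: "(2 + \<epsilon> + r) * K \<le> (1 - (1 + \<epsilon>) / 2.5) * Vt"
  proof -
    have "(2 + \<epsilon> + r) * K = ((2 + \<epsilon> + r) / theta \<epsilon>) * (theta \<epsilon> * K)"
      using thge rbig by simp
    also have "\<dots> \<le> ((2 + \<epsilon> + r) / theta \<epsilon>) * Vt"
      using VK thge rbig assms(8) by (intro mult_left_mono) auto
    also have "(2 + \<epsilon> + r) / theta \<epsilon> \<le> 1 - (1 + \<epsilon>) / 2.5"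
    proof -
      have "(2 + \<epsilon> + r) / theta \<epsilon> = (2 + \<epsilon> + r) * (1 - \<epsilon>) / (2 * (r + 1))"
        unfolding th using assms(9) rbig by (simp add: field_simps)
      also have "\<dots> \<le> 1 - (1 + \<epsilon>) / 2.5"
      proof -
        have "(2 + \<epsilon> + r) * (1 - \<epsilon>) \<le> (1 - (1 + \<epsilon>) / 2.5) * (2 * (r + 1))"
        proof -
          have "(1 + \<epsilon>) * (1 - \<epsilon>) \<le> 1" by (simp add: algebra_simps)
          hence "(2 + \<epsilon> + r) * (1 - \<epsilon>) \<le> (r + 1) * (1 - \<epsilon>) + 1"
            by (simp add: algebra_simps)
          moreover have "(r + 1) * (1 - \<epsilon>) + 1 \<le> (1 - (1 + \<epsilon>) / 2.5) * (2 * (r + 1))"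
          proof -
            have "(1 - (1 + \<epsilon>) / 2.5) * (2 * (r + 1)) - (r + 1) * (1 - \<epsilon>)
                  = (r + 1) * (0.2 + 0.2 * \<epsilon>)" by (simp add: field_simps)
            moreover have "(r + 1) * (0.2 + 0.2 * \<epsilon>) \<ge> (r+1) * 0.2" using rbig assms(8)
              by (intro mult_left_mono) auto
            moreover have "(r+1) * 0.2 \<ge> 1" using rbig by simp
            ultimately show ?thesis by linarith
          qed
          ultimately show ?thesis by simp
        qed
        thus ?thesis using rbig by (simp add: divide_le_eq)
      qed
      finally show ?thesis .
    qed
    hence "((2 + \<epsilon> + r) / theta \<epsilon>) * Vt \<le> (1 - (1 + \<epsilon>) / 2.5) * Vt"
      using VK thge rbig K1 by (intro mult_right_mono) (auto intro: order_trans[of 0 "theta \<epsilon> * K"])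
    finally show ?thesis .
  qed
  have VM: "Vt \<le> 2.5 * M"
  proof -
    have e1: "(1 - (1 + \<epsilon>) / 2.5) * Vt = Vt - (1 + \<epsilon>) / 2.5 * Vt" by (simp add: algebra_simps)
    have "(1 + \<epsilon>) / 2.5 * Vt \<le> (1 + \<epsilon>) * M" using Vle2 keyK unfolding e1 by linarith
    hence "(1 + \<epsilon>) * Vt \<le> (1 + \<epsilon>) * (2.5 * M)" by (simp add: algebra_simps)
    thus ?thesis using assms(8) by simp
  qed
  show ?thesis
  proof (cases "C > 0 \<and> t - 1 > 0")
    case False
    have "theta \<epsilon> * K \<ge> 0" using thge rbig K1 by simp
    hence "Vt \<ge> 0" using VK by linarith
    hence "72 * Vt * C / real (t - 1) \<le> 0"
      using \<open>Vt \<ge> 0\<close> False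
      by (cases "C > 0") (auto intro!: divide_nonpos_nonneg mult_nonneg_nonpos simp: not_less)
    hence "sqrt (72 * Vt * C / real (t - 1)) \<le> 0" by simp
    thus ?thesis using Dl0 unfolding Vt_def C_def Dl_def by linarith
  next
    case True
    hence Ct: "C > 0" "real (t - 1) > 0" by auto
    have "72 * Vt * C / real (t - 1) \<le> 72 * (2.5 * M) * C / real (t - 1)"
      using VM Ct by (intro divide_right_mono mult_right_mono) auto
    also have "\<dots> = Dl\<^sup>2" unfolding M_def using Ct by (simp add: field_simps)
    finally have "sqrt (72 * Vt * C / real (t - 1)) \<le> sqrt (Dl\<^sup>2)" by (rule real_sqrt_le_mono)
    thus ?thesis using Dl0 unfolding Vt_def C_def Dl_def by simp
  qed
qed

end
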